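(* Extensibility is hereditary: if a pair $(\Gamma,\mathcal{K})$ is extensible (in degree $2d$), then so is any pair $(\Gamma',\mathcal{K}')$ subordinate to $(\Gamma,\mathcal{K})$.
   Context: All lattices even. For a graph $\Gamma$ (edges with multiplicities), let $\mathbb{Z}\Gamma$ be freely generated by the vertices with $v^2=-2$ and $u\cdot v$ the number of edges between $u\ne v$, and $\operatorname{Fano}_{2d}(\Gamma):=(\mathbb{Z}\Gamma+\mathbb{Z}h)/\ker$, with $h^2=2d>0$, $h\cdot v=1$ for all vertices; it is assumed hyperbolic. For an isotropic subgroup $\mathcal{K}$ of the discriminant group $\operatorname{Fano}(\Gamma)^\vee/\operatorname{Fano}(\Gamma)$ (with its $\mathbb{Q}/2\mathbb{Z}$-valued quadratic form), $\operatorname{Fano}(\Gamma,\mathcal{K})$ is the corresponding even finite index extension. For a root lattice $\operatorname{rt}(S,h)$ spanned by $\{r\in S:r^2=-2, r\cdot h=0\}$ and a Weyl chamber $\Delta$ with simple roots $\mathfrak{b}(\Delta)$, lines are $\operatorname{Fn}_\Delta(S,h)=\{l: l^2=-2, l\cdot h=1, l\cdot e\ge0\ \forall e\in\mathfrak{b}(\Delta)\}$. $(\Gamma,\mathcal{K})$ is extensible if there is a Weyl chamber $\Delta$ for $\operatorname{rt}(\operatorname{Fano}(\Gamma,\mathcal{K}),h)$ with $\Gamma\subset\operatorname{Fn}_\Delta(\operatorname{Fano}(\Gamma,\mathcal{K}),h)$. For an induced subgraph $\Gamma'\subset\Gamma$, $\mathcal{K}|_{\Gamma'}:=\bigl((\operatorname{Fano}(\Gamma')\otimes\mathbb{Q})\cap\operatorname{Fano}(\Gamma,\mathcal{K})\bigr)/\operatorname{Fano}(\Gamma')\subset\operatorname{Fano}(\Gamma')^\vee/\operatorname{Fano}(\Gamma')$,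 where $\operatorname{Fano}(\Gamma')$ is identified with the sublattice of $\operatorname{Fano}(\Gamma,\mathcal{K})$ spanned by $h$ and $\Gamma'$. $(\Gamma',\mathcal{K}')$ is subordinate to $(\Gamma,\mathcal{K})$ if $\Gamma'\subset\Gamma$ is an induced subgraph and $\mathcal{K}'\subset\mathcal{K}|_{\Gamma'}$. *)

theory Defs
  imports "HOL-Analysis.Analysis"
begin

text \<open>
A graph with multiplicities on a finite vertex type 'v is given by a
vertex set V and a symmetric multiplicity function m (m u v = number of edges
between u and v for u different from v; m v v is ignored).  An induced subgraph is
given by a subset V' of V with the same m.

The formal vector space: vectors in real^('v option); coordinate None is h,
coordinate Some v is the vertex v.  The vectors relevant for the graph with vertex
set V are those supported on None and Some ` V.  The lattice Fano(Gamma) is the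
quotient of the Z-span by the kernel; we work with preimages in the formal space
(every subgroup of Fano(Gamma) tensor R is represented by its preimage, which
contains the radical).  All notions below are invariant under the radical.
\<close>

type_synonym 'v fvec = "real ^ ('v option)"

definition idx :: "'v set \<Rightarrow> 'v option set" where
  "idx V = insert None (Some ` V)"

definition Wsp :: "'v::finite set \<Rightarrow> 'v fvec set" where
  "Wsp V = {x. \<forall>a. a \<notin> idx V \<longrightarrow> x $ a = 0}"

definition bvec :: "'v option \<Rightarrow> 'v::finite fvec" where
  "bvec a = (\<chi> b. if b = a then 1 else 0)"

abbreviation hvec :: "'v::finite fvec" where
  "hvec \<equiv> bvec None"

definition gram :: "nat \<Rightarrow> ('v \<Rightarrow> 'v \<Rightarrow> nat) \<Rightarrow> 'v option \<Rightarrow> 'v option \<Rightarrow> real" where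
  "gram d m a b = (case (a, b) of
      (None, None) \<Rightarrow> 2 * real d
    | (None, Some _) \<Rightarrow> 1
    | (Some _, None) \<Rightarrow> 1
    | (Some u, Some v) \<Rightarrow> (if u = v then -2 else real (m u v)))"

definition bil :: "nat \<Rightarrow> ('v \<Rightarrow> 'v \<Rightarrow> nat) \<Rightarrow> 'v::finite set \<Rightarrow> 'v fvec \<Rightarrow> 'v fvec \<Rightarrow> real" where
  "bil d m V x y = (\<Sum>a\<in>idx V. \<Sum>b\<in>idx V. x $ a * y $ b * gram d m a b)"

definition rad :: "nat \<Rightarrow> ('v \<Rightarrow> 'v \<Rightarrow> nat) \<Rightarrow> 'v::finite set \<Rightarrow> 'v fvec set" where
  "rad d m V = {x \<in> Wsp V. \<forall>y\<in>Wsp V. bil d m V x y = 0}"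

definition zspan :: "'v::finite set \<Rightarrow> 'v fvec set" where
  "zspan V = {x \<in> Wsp V. \<forall>a. x $ a \<in> \<int>}"

text \<open>Preimage of Fano_{2d}(Gamma) = (Z Gamma + Z h)/ker in the formal space.\<close>
definition Fano :: "nat \<Rightarrow> ('v \<Rightarrow> 'v \<Rightarrow> nat) \<Rightarrow> 'v::finite set \<Rightarrow> 'v fvec set" where
  "Fano d m V = {x + r | x r. x \<in> zspan V \<and> r \<in> rad d m V}"

text \<open>Hyperbolic: positive inertia index exactly one (no positive definite plane,
and some positive vector).\<close>
definition hyperbolic :: "nat \<Rightarrow> ('v \<Rightarrow> 'v \<Rightarrow> nat) \<Rightarrow> 'v::finite set \<Rightarrow> bool" where
  "hyperbolic d m V \<longleftrightarrow>
     (\<exists>x\<in>Wsp V. bil d m V x x > 0) \<and>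
     (\<forall>x\<in>Wsp V. \<forall>y\<in>Wsp V. \<not> (bil d m V x x > 0 \<and>
         bil d m V x x * bil d m V y y - (bil d m V x y)\<^sup>2 > 0))"

definition dual :: "nat \<Rightarrow> ('v \<Rightarrow> 'v \<Rightarrow> nat) \<Rightarrow> 'v::finite set \<Rightarrow> 'v fvec set" where
  "dual d m V = {x \<in> Wsp V. \<forall>y\<in>Fano d m V. bil d m V x y \<in> \<int>}"

definition coset :: "'v::finite fvec set \<Rightarrow> 'v fvec \<Rightarrow> 'v fvec set" where
  "coset S x = {x + y | y. y \<in> S}"

text \<open>Discriminant group Fano^vee / Fano, elements are cosets.\<close>
definition disc :: "nat \<Rightarrow> ('v \<Rightarrow> 'v \<Rightarrow> nat) \<Rightarrow> 'v::finite set \<Rightarrow> 'v fvec set set" where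
  "disc d m V = {coset (Fano d m V) x | x. x \<in> dual d m V}"

definition isotropic_subgroup ::
  "nat \<Rightarrow> ('v \<Rightarrow> 'v \<Rightarrow> nat) \<Rightarrow> 'v::finite set \<Rightarrow> 'v fvec set set \<Rightarrow> bool" where
  "isotropic_subgroup d m V K \<longleftrightarrow>
     K \<subseteq> disc d m V \<and>
     Fano d m V \<in> K \<and>
     (\<forall>A\<in>K. \<forall>B\<in>K. {a + b | a b. a \<in> A \<and> b \<in> B} \<in> K) \<and>
     (\<forall>A\<in>K. {- a | a. a \<in> A} \<in> K) \<and>
     (\<forall>A\<in>K. \<forall>a\<in>A. bil d m V a a / 2 \<in> \<int>)"

text \<open>Preimage of the even finite index extension Fano(Gamma, K).\<close>
definition FanoK :: "'v::finite fvec set set \<Rightarrow> 'v fvec set" where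
  "FanoK K = \<Union>K"

definition roots :: "nat \<Rightarrow> ('v \<Rightarrow> 'v \<Rightarrow> nat) \<Rightarrow> 'v::finite set \<Rightarrow> 'v fvec set \<Rightarrow> 'v fvec set" where
  "roots d m V S = {r \<in> S. bil d m V r r = -2 \<and> bil d m V r hvec = 0}"

definition chamber_space :: "nat \<Rightarrow> ('v \<Rightarrow> 'v \<Rightarrow> nat) \<Rightarrow> 'v::finite set \<Rightarrow> 'v fvec set \<Rightarrow> 'v fvec set" where
  "chamber_space d m V S =
     {x \<in> span (roots d m V S). \<forall>r\<in>roots d m V S. bil d m V x r \<noteq> 0}"

definition weyl_chamber ::
  "nat \<Rightarrow> ('v \<Rightarrow> 'v \<Rightarrow> nat) \<Rightarrow> 'v::finite set \<Rightarrow> 'v fvec set \<Rightarrow> 'v fvec set \<Rightarrow> bool" where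
  "weyl_chamber d m V S \<Delta> \<longleftrightarrow>
     (\<exists>x\<in>chamber_space d m V S. \<Delta> = connected_component_set (chamber_space d m V S) x)"

definition pos_roots ::
  "nat \<Rightarrow> ('v \<Rightarrow> 'v \<Rightarrow> nat) \<Rightarrow> 'v::finite set \<Rightarrow> 'v fvec set \<Rightarrow> 'v fvec set \<Rightarrow> 'v fvec set" where
  "pos_roots d m V S \<Delta> = {r \<in> roots d m V S. \<forall>x\<in>\<Delta>. bil d m V r x > 0}"

definition simple_roots ::
  "nat \<Rightarrow> ('v \<Rightarrow> 'v \<Rightarrow> nat) \<Rightarrow> 'v::finite set \<Rightarrow> 'v fvec set \<Rightarrow> 'v fvec set \<Rightarrow> 'v fvec set" where
  "simple_roots d m V S \<Delta> =
     {e \<in> pos_roots d m V S \<Delta>.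
        \<not> (\<exists>a\<in>pos_roots d m V S \<Delta>. \<exists>b\<in>pos_roots d m V S \<Delta>. e = a + b)}"

definition lines ::
  "nat \<Rightarrow> ('v \<Rightarrow> 'v \<Rightarrow> nat) \<Rightarrow> 'v::finite set \<Rightarrow> 'v fvec set \<Rightarrow> 'v fvec set \<Rightarrow> 'v fvec set" where
  "lines d m V S \<Delta> =
     {l \<in> S. bil d m V l l = -2 \<and> bil d m V l hvec = 1 \<and>
            (\<forall>e\<in>simple_roots d m V S \<Delta>. bil d m V l e \<ge> 0)}"

definition extensible ::
  "nat \<Rightarrow> ('v \<Rightarrow> 'v \<Rightarrow> nat) \<Rightarrow> 'v::finite set \<Rightarrow> 'v fvec set set \<Rightarrow> bool" where
  "extensible d m V K \<longleftrightarrow>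
     (\<exists>\<Delta>. weyl_chamber d m V (FanoK K) \<Delta> \<and>
          (\<forall>v\<in>V. bvec (Some v) \<in> lines d m V (FanoK K) \<Delta>))"

definition restr ::
  "nat \<Rightarrow> ('v \<Rightarrow> 'v \<Rightarrow> nat) \<Rightarrow> 'v::finite set \<Rightarrow> 'v fvec set set \<Rightarrow> 'v set \<Rightarrow> 'v fvec set set" where
  "restr d m V K V' = {coset (Fano d m V') x | x. x \<in> Wsp V' \<and> x \<in> FanoK K}"

definition subordinate ::
  "nat \<Rightarrow> ('v \<Rightarrow> 'v \<Rightarrow> nat) \<Rightarrow> 'v::finite set \<Rightarrow> 'v fvec set set \<Rightarrow>
     'v set \<Rightarrow> 'v fvec set set \<Rightarrow> bool" where
  "subordinate d m V' K' V K \<longleftrightarrow>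
     V' \<subseteq> V \<and> isotropic_subgroup d m V' K' \<and> K' \<subseteq> restr d m V K V'"

end

theory Submission
  imports Defs
begin


lemma gram_sym: "\<forall>u v. m u v = m v u \<Longrightarrow> gram d m a b = gram d m b a"
  by (auto simp: gram_def split: option.splits)

lemma bil_add_left: "bil d m V (x + y) z = bil d m V x z + bil d m V y z"
  unfolding bil_def by (simp add: distrib_right sum.distrib)
lemma bil_add_right: "bil d m V z (x + y) = bil d m V z x + bil d m V z y"
  unfolding bil_def by (simp add: distrib_right distrib_left sum.distrib)
lemma bil_diff_left: "bil d m V (x - y) z = bil d m V x z - bil d m V y z"
  unfolding bil_def by (simp add: left_diff_distrib sum_subtractf)
lemma bil_diff_right: "bil d m V z (x - y) = bil d m V z x - bil d m V z y"
  unfolding bil_def by (simp add: left_diff_distrib right_diff_distrib sum_subtractf)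
lemma bil_scale_left: "bil d m V (c *\<^sub>R x) z = c * bil d m V x z"
  unfolding bil_def by (simp add: sum_distrib_left mult.assoc)
lemma bil_scale_right: "bil d m V z (c *\<^sub>R x) = c * bil d m V z x"
  unfolding bil_def by (simp add: sum_distrib_left mult_ac)
lemma bil_zero_left[simp]: "bil d m V 0 z = 0"
  unfolding bil_def by simp
lemma bil_zero_right[simp]: "bil d m V z 0 = 0"
  unfolding bil_def by simp
lemma bil_sym: "\<forall>u v. m u v = m v u \<Longrightarrow> bil d m V x y = bil d m V y x"
  unfolding bil_def
  apply (subst sum.swap)
  apply (intro sum.cong refl)
  using gram_sym by (metis mult.commute)

lemma finite_idx[simp]: "finite (idx (V::'v::finite set))"
  by simp

lemma delta_aux: "finite A \<Longrightarrow> b \<in> A \<Longrightarrow> (\<Sum>c\<in>A. u * (if c = b then 1 else 0) * (g c::real)) = u * g b"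
proof -
  assume "finite A" "b \<in> A"
  have "(\<Sum>c\<in>A. u * (if c = b then 1 else 0) * (g c::real)) = (\<Sum>c\<in>A. if c = b then u * g c else 0)"
    by (rule sum.cong) auto
  then show ?thesis using \<open>finite A\<close> \<open>b \<in> A\<close> by (simp add: sum.delta)
qed

lemma delta_aux2: "finite A \<Longrightarrow> b \<in> A \<Longrightarrow> (\<Sum>c\<in>A. (if c = b then 1 else 0) * (g c::real)) = g b"
  using delta_aux[of A b 1 g] by simp

lemma bil_bvec_right: "b \<in> idx V \<Longrightarrow> bil d m V x (bvec b) = (\<Sum>a\<in>idx V. x$a * gram d m a b)"
  unfolding bil_def bvec_def by (simp add: delta_aux)

lemma bil_expand_right:
  "bil d m V r y = (\<Sum>b\<in>idx V. y$b * bil d m V r (bvec b))"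
proof -
  have "bil d m V r y = (\<Sum>b\<in>idx V. \<Sum>a\<in>idx V. y$b * (r$a * gram d m a b))"
    unfolding bil_def by (subst sum.swap) (simp add: mult_ac)
  also have "\<dots> = (\<Sum>b\<in>idx V. y$b * bil d m V r (bvec b))"
    by (intro sum.cong refl) (simp add: bil_bvec_right sum_distrib_left)
  finally show ?thesis .
qed

lemma bvec_bvec: "a \<in> idx V \<Longrightarrow> b \<in> idx V \<Longrightarrow> bil d m V (bvec a) (bvec b) = gram d m a b"
  by (subst bil_bvec_right) (simp_all add: bvec_def delta_aux2)

lemma idx_mono: "V' \<subseteq> V \<Longrightarrow> idx V' \<subseteq> idx V"
  unfolding idx_def by auto

lemma Wsp_mono: "V' \<subseteq> V \<Longrightarrow> Wsp V' \<subseteq> Wsp V"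
  unfolding Wsp_def using idx_mono by blast

lemma Wsp_add: "x \<in> Wsp V \<Longrightarrow> y \<in> Wsp V \<Longrightarrow> x + y \<in> Wsp V"
  unfolding Wsp_def by simp
lemma Wsp_diff: "x \<in> Wsp V \<Longrightarrow> y \<in> Wsp V \<Longrightarrow> x - y \<in> Wsp V"
  unfolding Wsp_def by simp
lemma Wsp_scale: "x \<in> Wsp V \<Longrightarrow> c *\<^sub>R x \<in> Wsp V"
  unfolding Wsp_def by simp
lemma Wsp_zero: "0 \<in> Wsp V"
  unfolding Wsp_def by simp
lemma Wsp_bvec: "b \<in> idx V \<Longrightarrow> bvec b \<in> Wsp V"
  unfolding Wsp_def bvec_def by auto
lemma hvec_Wsp: "hvec \<in> Wsp V"
  by (simp add: Wsp_bvec idx_def)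

lemma bil_restrict:
  assumes "V' \<subseteq> V" "x \<in> Wsp V'" "y \<in> Wsp V'"
  shows "bil d m V' x y = bil d m V x y"
proof -
  have f: "\<And>a. a \<notin> idx V' \<Longrightarrow> x$a = 0" "\<And>a. a \<notin> idx V' \<Longrightarrow> y$a = 0"
    using assms unfolding Wsp_def by auto
  have "bil d m V x y = (\<Sum>a\<in>idx V'. \<Sum>b\<in>idx V. x $ a * y $ b * gram d m a b)"
    unfolding bil_def
    by (rule sum.mono_neutral_right) (auto simp: idx_mono[OF assms(1)] f)
  also have "\<dots> = bil d m V' x y"
    unfolding bil_def
    apply (rule sum.cong[OF refl])
    apply (rule sum.mono_neutral_right) by (auto simp: idx_mono[OF assms(1)] f)
  finally show ?thesis by simp
qed

lemma bil_hh: "bil d m V hvec hvec = 2 * real d"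
  by (simp add: bvec_bvec idx_def gram_def)

lemma neg_semidef:
  assumes "0 < d" "hyperbolic d m V" "\<forall>u v. m u v = m v u"
    and "y \<in> Wsp V" "bil d m V y hvec = 0"
  shows "bil d m V y y \<le> 0"
proof -
  have "\<not> (bil d m V hvec hvec > 0 \<and>
         bil d m V hvec hvec * bil d m V y y - (bil d m V hvec y)\<^sup>2 > 0)"
    using assms(2,4) hvec_Wsp unfolding hyperbolic_def by blast
  moreover have "bil d m V hvec y = 0" using assms(3,5) bil_sym by metis
  ultimately have "2 * real d * bil d m V y y \<le> 0" using assms(1) by (simp add: bil_hh)
  then show ?thesis using assms(1) by (simp add: mult_le_0_iff)
qed

lemma quad_expand:
  assumes "\<forall>u v. m u v = m v u"
  shows "bil d m V (y + t *\<^sub>R z) (y + t *\<^sub>R z) =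
    bil d m V y y + 2 * t * bil d m V y z + t^2 * bil d m V z z"
proof -
  have s: "bil d m V z y = bil d m V y z" using assms bil_sym by metis
  show ?thesis
    by (simp add: bil_add_left bil_add_right bil_scale_left bil_scale_right s power2_eq_square algebra_simps)
qed

definition Esp :: "nat \<Rightarrow> ('v \<Rightarrow> 'v \<Rightarrow> nat) \<Rightarrow> 'v::finite set \<Rightarrow> 'v fvec set" where
  "Esp d m V = {y \<in> Wsp V. bil d m V y hvec = 0}"

lemma Esp_add: "y \<in> Esp d m V \<Longrightarrow> z \<in> Esp d m V \<Longrightarrow> y + z \<in> Esp d m V"
  unfolding Esp_def by (simp add: Wsp_add bil_add_left)
lemma Esp_scale: "y \<in> Esp d m V \<Longrightarrow> c *\<^sub>R y \<in> Esp d m V"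
  unfolding Esp_def by (simp add: Wsp_scale bil_scale_left)
lemma Esp_diff: "y \<in> Esp d m V \<Longrightarrow> z \<in> Esp d m V \<Longrightarrow> y - z \<in> Esp d m V"
  unfolding Esp_def by (simp add: Wsp_diff bil_diff_left)
lemma subspace_Esp: "subspace (Esp d m V)"
proof -
  have "0 \<in> Esp d m V" by (simp add: Esp_def Wsp_zero)
  then show ?thesis by (simp add: subspace_def Esp_add Esp_scale)
qed
lemma subspace_Wsp: "subspace (Wsp V)"
  unfolding subspace_def using Wsp_add Wsp_scale Wsp_zero by blast

lemma null_rad:
  assumes "0 < d" "hyperbolic d m V" "\<forall>u v. m u v = m v u"
    and "y \<in> Esp d m V" "z \<in> Esp d m V" "bil d m V y y = 0"
  shows "bil d m V y z = 0"
proof (rule ccontr)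
  assume ne: "bil d m V y z \<noteq> 0"
  define t where "t = (1 - bil d m V z z) / (2 * bil d m V y z)"
  have "z + t *\<^sub>R y \<in> Esp d m V" using assms Esp_add Esp_scale by blast
  then have "bil d m V (z + t *\<^sub>R y) (z + t *\<^sub>R y) \<le> 0"
    using neg_semidef[OF assms(1,2,3)] unfolding Esp_def by blast
  moreover have "bil d m V z y = bil d m V y z" using assms(3) bil_sym by metis
  ultimately have "bil d m V z z + 2 * t * bil d m V y z \<le> 0"
    using quad_expand[OF assms(3), of d V z t y] assms(6) by simp
  moreover have "2 * t * bil d m V y z = 1 - bil d m V z z"
    unfolding t_def using ne by simp
  ultimately show False by simp
qed

lemma cauchy_schwarz:
  assumes "0 < d" "hyperbolic d m V" "\<forall>u v. m u v = m v u"
    and "y \<in> Esp d m V" "z \<in> Esp d m V"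
  shows "(bil d m V y z)\<^sup>2 \<le> bil d m V y y * bil d m V z z"
proof (cases "bil d m V z z = 0")
  case True
  then have "bil d m V z y = 0" using null_rad[OF assms(1,2,3,5,4)] by simp
  then have "bil d m V y z = 0" using assms(3) bil_sym by metis
  then show ?thesis using True by simp
next
  case False
  have zz: "bil d m V z z < 0"
    using False neg_semidef[OF assms(1,2,3)] assms(5) unfolding Esp_def by force
  define t where "t = - bil d m V y z / bil d m V z z"
  have "y + t *\<^sub>R z \<in> Esp d m V" using assms Esp_add Esp_scale by blast
  then have "bil d m V (y + t *\<^sub>R z) (y + t *\<^sub>R z) \<le> 0"
    using neg_semidef[OF assms(1,2,3)] unfolding Esp_def by blast
  then have q: "bil d m V y y + 2 * t * bil d m V y z + t^2 * bil d m V z z \<le> 0"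
    using quad_expand[OF assms(3)] by metis
  have tz: "t * bil d m V z z = - bil d m V y z" unfolding t_def using False by simp
  have "0 \<le> bil d m V z z * (bil d m V y y + 2 * t * bil d m V y z + t^2 * bil d m V z z)"
    using q zz by (intro mult_nonpos_nonpos) auto
  also have "\<dots> = bil d m V z z * bil d m V y y + 2 * (t * bil d m V z z) * bil d m V y z
      + (t * bil d m V z z)^2"
    by (simp add: power2_eq_square algebra_simps)
  also have "\<dots> = bil d m V z z * bil d m V y y - (bil d m V y z)^2"
    by (simp add: tz power2_eq_square)
  finally show ?thesis by (simp add: mult.commute)
qed

lemma riesz:
  assumes "0 < d" "hyperbolic d m V" "\<forall>u v. m u v = m v u"
    and "finite S" "S \<subseteq> Esp d m V"
  shows "\<forall>p\<in>Esp d m V. \<exists>x'\<in>span S. \<forall>y\<in>span S. bil d m V y x' = bil d m V y p"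
  using assms(4,5)
proof (induction S rule: finite_induct)
  case empty
  then show ?case by (auto intro: span_zero)
next
  case (insert s S)
  let ?B = "bil d m V"
  have sym: "\<And>a b. ?B a b = ?B b a" using assms(3) bil_sym by metis
  have SE: "span S \<subseteq> Esp d m V"
    using insert.prems by (intro span_minimal subspace_Esp) auto
  have sE: "s \<in> Esp d m V" using insert.prems by auto
  have IH: "\<forall>p\<in>Esp d m V. \<exists>x'\<in>span S. \<forall>y\<in>span S. ?B y x' = ?B y p"
    using insert.IH insert.prems by auto
  have sub: "span S \<subseteq> span (insert s S)" by (rule span_mono) auto
  show ?case
  proof
    fix p assume pE: "p \<in> Esp d m V"
    obtain x0 where x0: "x0 \<in> span S" "\<And>y. y \<in> span S \<Longrightarrow> ?B y x0 = ?B y p"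
      using IH pE by blast
    obtain w0 where w0: "w0 \<in> span S" "\<And>y. y \<in> span S \<Longrightarrow> ?B y w0 = ?B y s"
      using IH sE by blast
    define u where "u = s - w0"
    have uE: "u \<in> Esp d m V" unfolding u_def using sE SE w0(1) Esp_diff by blast
    have x0E: "x0 \<in> Esp d m V" using SE x0(1) by blast
    have w0E: "w0 \<in> Esp d m V" using SE w0(1) by blast
    have wu: "\<And>w. w \<in> span S \<Longrightarrow> ?B w u = 0"
      unfolding u_def by (simp add: bil_diff_right w0(2))
    have uspan: "u \<in> span (insert s S)" unfolding u_def
      using sub w0(1) by (meson span_base insertI1 span_diff subsetD)
    have decomp: "\<And>y. y \<in> span (insert s S) \<Longrightarrow> \<exists>k w. w \<in> span S \<and> y = w + k *\<^sub>R s"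
      by (metis span_breakdown_eq diff_add_cancel)
    define c where "c = ?B s u"
    show "\<exists>x'\<in>span (insert s S). \<forall>y\<in>span (insert s S). ?B y x' = ?B y p"
    proof (cases "c = 0")
      case False
      define al where "al = ?B s (p - x0) / c"
      define x' where "x' = x0 + al *\<^sub>R u"
      have "x' \<in> span (insert s S)" unfolding x'_def
        using sub x0(1) uspan by (meson span_add span_scale subsetD)
      moreover have "?B y x' = ?B y p" if yin: "y \<in> span (insert s S)" for y
      proof -
        obtain k w where kw: "w \<in> span S" "y = w + k *\<^sub>R s" using decomp[OF yin] by blast
        have "?B w x' = ?B w p"
          unfolding x'_def by (simp add: bil_add_right bil_scale_right wu kw(1) x0(2))
        moreover have "?B s x' = ?B s p"
          unfolding x'_def al_def using False
          by (simp add: bil_add_right bil_scale_right bil_diff_right c_def[symmetric])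
        ultimately show ?thesis
          by (simp add: kw(2) bil_add_left bil_scale_left)
      qed
      ultimately show ?thesis by blast
    next
      case True
      have "?B u u = ?B s u - ?B w0 u" unfolding u_def by (simp add: bil_diff_left)
      also have "\<dots> = 0" using True c_def wu w0(1) by simp
      finally have uu: "?B u u = 0" .
      have unull: "\<And>z. z \<in> Esp d m V \<Longrightarrow> ?B u z = 0"
        using null_rad[OF assms(1,2,3) uE _ uu] by blast
      have s_eq: "s = w0 + u" unfolding u_def by simp
      have "?B y x0 = ?B y p" if yin: "y \<in> span (insert s S)" for y
      proof -
        obtain k w where kw: "w \<in> span S" "y = w + k *\<^sub>R s" using decomp[OF yin] by blast
        have "?B s x0 = ?B w0 x0" by (simp add: s_eq bil_add_left unull x0E)
        also have "\<dots> = ?B w0 p" using x0(2) w0(1) by simp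
        also have "\<dots> = ?B s p" by (simp add: s_eq bil_add_left unull pE)
        finally have "?B s x0 = ?B s p" .
        then show ?thesis
          by (simp add: kw(2) bil_add_left bil_scale_left x0(2) kw(1))
      qed
      then show ?thesis using sub x0(1) by blast
    qed
  qed
qed

lemma bvec_zspan: "b \<in> idx V \<Longrightarrow> bvec b \<in> zspan V"
  unfolding zspan_def using Wsp_bvec by (auto simp: bvec_def)

lemma zero_rad: "0 \<in> rad d m V"
  unfolding rad_def by (simp add: Wsp_zero)

lemma bvec_Fano: "b \<in> idx V \<Longrightarrow> bvec b \<in> Fano d m V"
proof -
  assume b: "b \<in> idx V"
  have "bvec b + 0 \<in> Fano d m V" unfolding Fano_def using bvec_zspan[OF b] zero_rad by blast
  then show ?thesis by simp
qed

lemma gram_Ints: "gram d m a b \<in> \<int>"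
  by (auto simp: gram_def split: option.splits)

lemma zspan_int: "z \<in> zspan V \<Longrightarrow> b \<in> idx V \<Longrightarrow> bil d m V z (bvec b) \<in> \<int>"
  by (auto simp: bil_bvec_right zspan_def gram_Ints intro!: Ints_sum Ints_mult)

lemma rad_zero: "\<rho> \<in> rad d m V \<Longrightarrow> y \<in> Wsp V \<Longrightarrow> bil d m V \<rho> y = 0"
  unfolding rad_def by blast

lemma rad_Wsp: "\<rho> \<in> rad d m V \<Longrightarrow> \<rho> \<in> Wsp V"
  unfolding rad_def by blast

lemma zspan_Wsp: "z \<in> zspan V \<Longrightarrow> z \<in> Wsp V"
  unfolding zspan_def by blast

lemma FanoK_props:
  assumes "K \<subseteq> disc d m V" "r \<in> FanoK K"
  shows "r \<in> Wsp V \<and> (\<forall>b\<in>idx V. bil d m V r (bvec b) \<in> \<int>)"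
proof -
  obtain A where A: "A \<in> K" "r \<in> A" using assms(2) unfolding FanoK_def by blast
  then obtain y where y: "y \<in> dual d m V" "A = coset (Fano d m V) y"
    using assms(1) unfolding disc_def by blast
  then obtain f where f: "f \<in> Fano d m V" "r = y + f"
    using A(2) unfolding coset_def by blast
  then obtain z \<rho> where zr: "z \<in> zspan V" "\<rho> \<in> rad d m V" "f = z + \<rho>"
    unfolding Fano_def by blast
  have yW: "y \<in> Wsp V" using y(1) unfolding dual_def by blast
  have "r \<in> Wsp V" using f(2) zr yW Wsp_add zspan_Wsp rad_Wsp by metis
  moreover have "bil d m V r (bvec b) \<in> \<int>" if b: "b \<in> idx V" for b
  proof -
    have "bil d m V y (bvec b) \<in> \<int>" using y(1) bvec_Fano[OF b] unfolding dual_def by blast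
    moreover have "bil d m V z (bvec b) \<in> \<int>" using zspan_int zr(1) b by blast
    moreover have "bil d m V \<rho> (bvec b) = 0" using rad_zero zr(2) Wsp_bvec b by blast
    ultimately show ?thesis by (simp add: f(2) zr(3) bil_add_left)
  qed
  ultimately show ?thesis by blast
qed

lemma int_abs_le_sq: "\<bar>j::int\<bar> \<le> j^2"
proof (cases "j = 0")
  case False
  then have "1 \<le> \<bar>j\<bar>" by simp
  then have "\<bar>j\<bar> * 1 \<le> \<bar>j\<bar> * \<bar>j\<bar>" by (intro mult_left_mono) auto
  then show ?thesis by (simp add: power2_eq_square abs_mult_self_eq)
qed simp

lemma finite_int_sq: "finite {k::real. k \<in> \<int> \<and> k^2 \<le> C}"
proof -
  define N where "N = \<lceil>C\<rceil>"
  have "{k::real. k \<in> \<int> \<and> k^2 \<le> C} \<subseteq> of_int ` {-N..N}"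
  proof
    fix k :: real assume "k \<in> {k::real. k \<in> \<int> \<and> k^2 \<le> C}"
    then obtain j where j: "k = of_int j" "(of_int j::real)^2 \<le> C" by (auto elim: Ints_cases)
    have "real_of_int \<bar>j\<bar> \<le> real_of_int (j^2)" using int_abs_le_sq of_int_le_iff by blast
    also have "\<dots> \<le> C" using j(2) by simp
    finally have "\<bar>j\<bar> \<le> N" unfolding N_def by linarith
    then have "j \<in> {-N..N}" by auto
    then show "k \<in> of_int ` {-N..N}" using j(1) by blast
  qed
  then show ?thesis by (rule finite_subset) simp
qed

lemma finite_vals:
  assumes "0 < d" "hyperbolic d m V" "\<forall>u v. m u v = m v u" "K \<subseteq> disc d m V"
  shows "finite ((\<lambda>r. bil d m V r x) ` roots d m V (FanoK K))"
proof -
  let ?B = "bil d m V"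
  let ?R = "roots d m V (FanoK K)"
  define bp where "bp b = bvec b - (?B (bvec b) hvec / (2 * real d)) *\<^sub>R hvec" for b
  have bpE: "bp b \<in> Esp d m V" if b: "b \<in> idx V" for b
  proof -
    have "bp b \<in> Wsp V" unfolding bp_def using Wsp_bvec[OF b] hvec_Wsp Wsp_diff Wsp_scale by blast
    moreover have "?B (bp b) hvec = 0" unfolding bp_def using assms(1)
      by (simp add: bil_diff_left bil_scale_left bil_hh)
    ultimately show ?thesis unfolding Esp_def by blast
  qed
  define F where "F b = {k::real. k \<in> \<int> \<and> k^2 \<le> 2 * \<bar>?B (bp b) (bp b)\<bar>}" for b
  define g where "g r = restrict (\<lambda>b. ?B r (bvec b)) (idx V)" for r
  have "g ` ?R \<subseteq> PiE (idx V) F"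
  proof
    fix f assume "f \<in> g ` ?R"
    then obtain r where r: "r \<in> ?R" "f = g r" by blast
    have rK: "r \<in> FanoK K" "?B r r = -2" "?B r hvec = 0" using r(1) unfolding roots_def by auto
    have rE: "r \<in> Esp d m V" using FanoK_props[OF assms(4) rK(1)] rK(3) unfolding Esp_def by blast
    have "?B r (bvec b) \<in> F b" if b: "b \<in> idx V" for b
    proof -
      have eq: "?B r (bp b) = ?B r (bvec b)" unfolding bp_def
        by (simp add: bil_diff_right bil_scale_right rK(3))
      have "(?B r (bp b))^2 \<le> ?B r r * ?B (bp b) (bp b)"
        using cauchy_schwarz[OF assms(1,2,3) rE bpE[OF b]] .
      also have "\<dots> \<le> 2 * \<bar>?B (bp b) (bp b)\<bar>" using rK(2) by simp
      finally show ?thesis unfolding F_def using FanoK_props[OF assms(4) rK(1)] b eq by auto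
    qed
    then show "f \<in> PiE (idx V) F" unfolding r(2) g_def by auto
  qed
  then have fin: "finite (g ` ?R)"
    by (rule finite_subset) (auto intro!: finite_PiE simp: F_def finite_int_sq)
  have ex: "?B r x = (\<Sum>b\<in>idx V. x$b * g r b)" for r
  proof -
    have "?B r x = (\<Sum>b\<in>idx V. x$b * ?B r (bvec b))" by (rule bil_expand_right)
    also have "\<dots> = (\<Sum>b\<in>idx V. x$b * g r b)" unfolding g_def by (intro sum.cong refl) simp
    finally show ?thesis .
  qed
  have "(\<lambda>r. ?B r x) ` ?R = (\<lambda>f. \<Sum>b\<in>idx V. x$b * f b) ` (g ` ?R)"
    unfolding image_image using ex by simp
  then show ?thesis using fin by simp
qed

lemma bil_cont: "continuous_on A (\<lambda>y. bil d m V r y)"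
proof -
  have c: "\<And>b. continuous_on A (\<lambda>y. y $ b)"
    by (rule linear_continuous_on[OF bounded_linear_vec_nth])
  show ?thesis
    by (subst bil_expand_right) (intro continuous_on_sum continuous_on_mult_right c)
qed

lemma sign_const:
  fixes f :: "'a::topological_space \<Rightarrow> real"
  assumes "connected D" "continuous_on D f" "x \<in> D" "y \<in> D" "\<forall>z\<in>D. f z \<noteq> 0" "f x > 0"
  shows "f y > 0"
proof (rule ccontr)
  assume "\<not> f y > 0"
  then have "f y \<le> 0" by simp
  have "connected (f ` D)" using assms(1,2) connected_continuous_image by blast
  then have H: "\<forall>a\<in>f ` D. \<forall>b\<in>f ` D. \<forall>z. a \<le> z \<longrightarrow> z \<le> b \<longrightarrow> z \<in> f ` D"
    using connected_iff_interval by blast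
  have "0 \<in> f ` D"
    using H[rule_format, of "f y" "f x" 0] assms(3,4,6) \<open>f y \<le> 0\<close> by simp
  then show False using assms(5) by auto
qed

lemma pos_nonneg:
  assumes "0 < d" "hyperbolic d m V" "\<forall>u v. m u v = m v u" "K \<subseteq> disc d m V"
    and "x \<in> \<Delta>" "\<forall>e\<in>simple_roots d m V (FanoK K) \<Delta>. bil d m V l e \<ge> 0"
    and "r \<in> pos_roots d m V (FanoK K) \<Delta>"
  shows "bil d m V l r \<ge> 0"
proof -
  let ?B = "bil d m V"
  let ?P = "pos_roots d m V (FanoK K) \<Delta>"
  define Vals where "Vals = (\<lambda>r. ?B r x) ` roots d m V (FanoK K)"
  have fin: "finite Vals" unfolding Vals_def using finite_vals[OF assms(1-4)] .
  show ?thesis using assms(7)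
  proof (induction r rule: measure_induct_rule[of "\<lambda>r. card {t\<in>Vals. t < ?B r x}"])
    case (less r)
    show ?case
    proof (cases "r \<in> simple_roots d m V (FanoK K) \<Delta>")
      case True
      then show ?thesis using assms(6) by blast
    next
      case False
      then obtain a b where ab: "a \<in> ?P" "b \<in> ?P" "r = a + b"
        using less.prems unfolding simple_roots_def by blast
      have pa: "?B a x > 0" and pb: "?B b x > 0"
        using ab(1,2) assms(5) unfolding pos_roots_def by auto
      have rx: "?B r x = ?B a x + ?B b x" using ab(3) by (simp add: bil_add_left)
      have lt: "card {t\<in>Vals. t < ?B c x} < card {t\<in>Vals. t < ?B r x}"
        if c: "c \<in> ?P" "?B c x < ?B r x" for c
      proof (rule psubset_card_mono)
        show "finite {t\<in>Vals. t < ?B r x}" using fin by simp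
        have "?B c x \<in> Vals" using c(1) unfolding Vals_def pos_roots_def by blast
        then show "{t\<in>Vals. t < ?B c x} \<subset> {t\<in>Vals. t < ?B r x}"
          using c(2) by auto
      qed
      have "?B l a \<ge> 0" using less.IH[OF lt[OF ab(1)] ab(1)] rx pb by simp
      moreover have "?B l b \<ge> 0" using less.IH[OF lt[OF ab(2)] ab(2)] rx pa by simp
      ultimately show ?thesis by (simp add: ab(3) bil_add_right)
    qed
  qed
qed



lemma zspan_add: "x \<in> zspan V \<Longrightarrow> y \<in> zspan V \<Longrightarrow> x + y \<in> zspan V"
  unfolding zspan_def by (auto simp: Wsp_add)

lemma zspan_mono: "V' \<subseteq> V \<Longrightarrow> zspan V' \<subseteq> zspan V"
  unfolding zspan_def using Wsp_mono by blast

lemma decomp_FanoK':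
  assumes "V' \<subseteq> V" "K \<subseteq> disc d m V" "K' \<subseteq> restr d m V K V'" "r' \<in> FanoK K'"
  shows "\<exists>rt \<rho>. rt \<in> FanoK K \<and> rt \<in> Wsp V' \<and> \<rho> \<in> rad d m V' \<and> r' = rt + \<rho>"
proof -
  obtain A' where A': "A' \<in> K'" "r' \<in> A'" using assms(4) unfolding FanoK_def by blast
  then obtain x0 where x0: "x0 \<in> Wsp V'" "x0 \<in> FanoK K" "A' = coset (Fano d m V') x0"
    using assms(3) unfolding restr_def by blast
  then obtain f where f: "f \<in> Fano d m V'" "r' = x0 + f" using A'(2) unfolding coset_def by blast
  then obtain z \<rho> where zr: "z \<in> zspan V'" "\<rho> \<in> rad d m V'" "f = z + \<rho>"
    unfolding Fano_def by blast
  obtain B0 where B0: "B0 \<in> K" "x0 \<in> B0" using x0(2) unfolding FanoK_def by blast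
  then obtain y0 where y0: "B0 = coset (Fano d m V) y0" using assms(2) unfolding disc_def by blast
  then obtain f0 where f0: "f0 \<in> Fano d m V" "x0 = y0 + f0" using B0(2) unfolding coset_def by blast
  then obtain z0 \<rho>0 where z0: "z0 \<in> zspan V" "\<rho>0 \<in> rad d m V" "f0 = z0 + \<rho>0"
    unfolding Fano_def by blast
  have zV: "z \<in> zspan V" using zr(1) zspan_mono[OF assms(1)] by blast
  have "(z0 + z) + \<rho>0 \<in> Fano d m V" unfolding Fano_def using zspan_add[OF z0(1) zV] z0(2) by blast
  moreover have "x0 + z = y0 + ((z0 + z) + \<rho>0)" using f0(2) z0(3) by (simp add: algebra_simps)
  ultimately have "x0 + z \<in> B0" unfolding y0 coset_def by blast
  then have "x0 + z \<in> FanoK K" using B0(1) unfolding FanoK_def by blast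
  moreover have "x0 + z \<in> Wsp V'" using x0(1) zr(1) zspan_Wsp Wsp_add by blast
  moreover have "r' = (x0 + z) + \<rho>" using f(2) zr(3) by (simp add: algebra_simps)
  ultimately show ?thesis using zr(2) by blast
qed

theorem corollary3p3:
  fixes d :: nat and m :: "'v::finite \<Rightarrow> 'v \<Rightarrow> nat"
    and V V' :: "'v set" and K K' :: "'v fvec set set"
  assumes "0 < d"
    and "\<forall>u v. m u v = m v u"
    and "hyperbolic d m V"
    and "isotropic_subgroup d m V K"
    and "extensible d m V K"
    and "subordinate d m V' K' V K"
  shows "extensible d m V' K'"
proof -
  note d0 = assms(1) and symm = assms(2) and hyp = assms(3)
  let ?B = "bil d m V"
  let ?B' = "bil d m V'"
  have sB: "\<And>a b. ?B a b = ?B b a" by (rule bil_sym[OF symm])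
  have sB': "\<And>a b. ?B' a b = ?B' b a" by (rule bil_sym[OF symm])
  have VV: "V' \<subseteq> V" and iso': "isotropic_subgroup d m V' K'" and Kr: "K' \<subseteq> restr d m V K V'"
    using assms(6) unfolding subordinate_def by auto
  have Kd: "K \<subseteq> disc d m V" using assms(4) unfolding isotropic_subgroup_def by blast
  have Kd': "K' \<subseteq> disc d m V'" using iso' unfolding isotropic_subgroup_def by blast
  obtain \<Delta> where ch: "weyl_chamber d m V (FanoK K) \<Delta>"
    and ln: "\<forall>v\<in>V. bvec (Some v) \<in> lines d m V (FanoK K) \<Delta>"
    using assms(5) unfolding extensible_def by blast
  let ?C = "chamber_space d m V (FanoK K)"
  obtain x where xC: "x \<in> ?C" and Dx: "\<Delta> = connected_component_set ?C x"
    using ch unfolding weyl_chamber_def by blast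
  let ?R = "roots d m V (FanoK K)"
  let ?R' = "roots d m V' (FanoK K')"
  have RE: "?R \<subseteq> Esp d m V"
    using FanoK_props[OF Kd] unfolding roots_def Esp_def by blast
  have xE: "x \<in> Esp d m V"
    using xC span_minimal[OF RE subspace_Esp] unfolding chamber_space_def by blast
  have xne: "\<forall>r\<in>?R. ?B x r \<noteq> 0" using xC unfolding chamber_space_def by blast
  have FW': "FanoK K' \<subseteq> Wsp V'" using FanoK_props[OF Kd'] by blast
  have R'W: "?R' \<subseteq> Wsp V'" using FW' unfolding roots_def by blast
  have R'E: "?R' \<subseteq> Esp d m V"
  proof
    fix r' assume r': "r' \<in> ?R'"
    have "r' \<in> Wsp V'" using R'W r' by blast
    moreover have "?B' r' hvec = 0" using r' unfolding roots_def by blast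
    ultimately show "r' \<in> Esp d m V" unfolding Esp_def
      using bil_restrict[OF VV _ hvec_Wsp] Wsp_mono[OF VV] by auto
  qed
  have rho_null: "?B \<rho> z = 0" if "\<rho> \<in> rad d m V'" "z \<in> Esp d m V" for \<rho> z
  proof -
    have \<rho>W: "\<rho> \<in> Wsp V'" using rad_Wsp that(1) by blast
    have "\<rho> \<in> Esp d m V" unfolding Esp_def
      using bil_restrict[OF VV \<rho>W hvec_Wsp] rad_zero[OF that(1) hvec_Wsp] Wsp_mono[OF VV] \<rho>W by auto
    moreover have "?B \<rho> \<rho> = 0"
      using bil_restrict[OF VV \<rho>W \<rho>W] rad_zero[OF that(1) \<rho>W] by simp
    ultimately show ?thesis using null_rad[OF d0 hyp symm _ that(2)] by blast
  qed
  obtain S0 where S0: "S0 \<subseteq> ?R'" "independent S0" "?R' \<subseteq> span S0"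
    using maximal_independent_subset by blast
  have finS0: "finite S0" using S0(2) finiteI_independent by blast
  obtain x' where x'S: "x' \<in> span S0" and x'eq: "\<And>y. y \<in> span S0 \<Longrightarrow> ?B y x' = ?B y x"
    using riesz[OF d0 hyp symm finS0] S0(1) R'E xE by blast
  have spanR': "span S0 \<subseteq> span ?R'" using S0(1) by (rule span_mono)
  have spanW: "span ?R' \<subseteq> Wsp V'" using R'W by (intro span_minimal subspace_Wsp)
  have x'R: "x' \<in> span ?R'" using x'S spanR' by blast
  have x'W: "x' \<in> Wsp V'" using x'R spanW by blast
  have KF: "\<exists>rt\<in>?R. ?B' r' x' = ?B rt x \<and> (\<forall>w\<in>Wsp V'. ?B' w r' = ?B w rt)"
    if r': "r' \<in> ?R'" for r'
  proof -
    have r'K: "r' \<in> FanoK K'" and r'2: "?B' r' r' = -2" and r'h: "?B' r' hvec = 0"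
      using r' unfolding roots_def by auto
    obtain rt \<rho> where d: "rt \<in> FanoK K" "rt \<in> Wsp V'" "\<rho> \<in> rad d m V'" "r' = rt + \<rho>"
      using decomp_FanoK'[OF VV Kd Kr r'K] by blast
    have r'W: "r' \<in> Wsp V'" using r' R'W by blast
    have eqw: "?B' r' w = ?B' rt w" if "w \<in> Wsp V'" for w
      using rad_zero[OF d(3) that] by (simp add: d(4) bil_add_left)
    have "?B' rt rt = ?B' r' r'"
      using eqw[OF d(2)] eqw[OF r'W] sB'[of r' rt] by simp
    then have "?B rt rt = -2" using r'2 bil_restrict[OF VV d(2) d(2)] by simp
    moreover have "?B rt hvec = 0"
      using eqw[OF hvec_Wsp] r'h bil_restrict[OF VV d(2) hvec_Wsp] by simp
    ultimately have rtR: "rt \<in> ?R" using d(1) unfolding roots_def by blast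
    have "?B' r' x' = ?B r' x'" using bil_restrict[OF VV r'W x'W] .
    also have "\<dots> = ?B r' x" using x'eq S0(3) r' by blast
    also have "\<dots> = ?B rt x" using rho_null[OF d(3) xE] by (simp add: d(4) bil_add_left)
    finally have e1: "?B' r' x' = ?B rt x" .
    have "?B' w r' = ?B w rt" if w: "w \<in> Wsp V'" for w
    proof -
      have "?B' w r' = ?B' rt w" using eqw[OF w] sB'[of w r'] by simp
      also have "\<dots> = ?B' w rt" by (rule sB')
      also have "\<dots> = ?B w rt" using bil_restrict[OF VV w d(2)] .
      finally show ?thesis .
    qed
    then show ?thesis using rtR e1 by blast
  qed
  let ?C' = "chamber_space d m V' (FanoK K')"
  define \<Delta>' where "\<Delta>' = connected_component_set ?C' x'"
  have x'C: "x' \<in> ?C'"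
  proof -
    have "?B' x' r' \<noteq> 0" if r': "r' \<in> ?R'" for r'
    proof -
      obtain rt where rt: "rt \<in> ?R" "?B' r' x' = ?B rt x" using KF[OF r'] by blast
      have "?B x rt \<noteq> 0" using xne rt(1) by blast
      then show ?thesis using rt(2) sB'[of x' r'] sB[of rt x] by simp
    qed
    then show ?thesis unfolding chamber_space_def using x'R by blast
  qed
  have wc: "weyl_chamber d m V' (FanoK K') \<Delta>'"
    unfolding weyl_chamber_def \<Delta>'_def using x'C by blast
  have x'D: "x' \<in> \<Delta>'" unfolding \<Delta>'_def using x'C by simp
  have xD: "x \<in> \<Delta>" unfolding Dx using xC by simp
  have DC: "\<Delta> \<subseteq> ?C" unfolding Dx by (rule connected_component_subset)
  have "bvec (Some v) \<in> lines d m V' (FanoK K') \<Delta>'" if v: "v \<in> V'" for v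
  proof -
    have vi: "Some v \<in> idx V'" using v unfolding idx_def by blast
    have "Fano d m V' \<in> K'" using iso' unfolding isotropic_subgroup_def by blast
    then have "bvec (Some v) \<in> FanoK K'" using bvec_Fano[OF vi] unfolding FanoK_def by blast
    moreover have "?B' (bvec (Some v)) (bvec (Some v)) = -2"
      using vi by (simp add: bvec_bvec gram_def)
    moreover have "?B' (bvec (Some v)) hvec = 1"
      using vi by (simp add: bvec_bvec gram_def idx_def)
    moreover have "?B' (bvec (Some v)) e \<ge> 0" if e: "e \<in> simple_roots d m V' (FanoK K') \<Delta>'" for e
    proof -
      have eP: "e \<in> pos_roots d m V' (FanoK K') \<Delta>'" using e unfolding simple_roots_def by blast
      then have eR: "e \<in> ?R'" and epos: "?B' e x' > 0"
        using x'D unfolding pos_roots_def by auto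
      obtain rt where rt: "rt \<in> ?R" "?B' e x' = ?B rt x"
        and rtw: "\<forall>w\<in>Wsp V'. ?B' w e = ?B w rt" using KF[OF eR] by blast
      have "\<forall>y\<in>\<Delta>. ?B rt y > 0"
      proof
        fix y assume yD: "y \<in> \<Delta>"
        show "?B rt y > 0"
        proof (rule sign_const[of \<Delta> "?B rt" x y])
          show "connected \<Delta>" unfolding Dx by simp
          show "continuous_on \<Delta> (?B rt)" by (rule bil_cont)
          show "\<forall>z\<in>\<Delta>. ?B rt z \<noteq> 0"
          proof
            fix z assume "z \<in> \<Delta>"
            then have "z \<in> ?C" using DC by blast
            then have "?B z rt \<noteq> 0" using rt(1) unfolding chamber_space_def by blast
            then show "?B rt z \<noteq> 0" using sB[of rt z] by simp
          qed
          show "?B rt x > 0" using rt(2) epos by simp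
        qed (use xD yD in auto)
      qed
      then have rtP: "rt \<in> pos_roots d m V (FanoK K) \<Delta>" using rt(1) unfolding pos_roots_def by blast
      have vV: "v \<in> V" using v VV by blast
      have "\<forall>e\<in>simple_roots d m V (FanoK K) \<Delta>. ?B (bvec (Some v)) e \<ge> 0"
        using ln vV unfolding lines_def by blast
      then have "?B (bvec (Some v)) rt \<ge> 0"
        using pos_nonneg[OF d0 hyp symm Kd xD _ rtP] by blast
      then show ?thesis using rtw Wsp_bvec[OF vi] by simp
    qed
    ultimately show ?thesis unfolding lines_def by blast
  qed
  then show ?thesis unfolding extensible_def using wc by blast
qed

end
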